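(* Let $R$ be a commutative ring and $f\in R$. If $Rf^n$ is a projective $R$-module for some $n\geq 1$, then for every $k\geq n$ the $R$-module $Rf^k$ is canonically isomorphic to $Rf^n$ (equivalently, $\operatorname{Ann}(f^k)=\operatorname{Ann}(f^n)$ for all $k\geq n$). *)

theory Defs
  imports Main
begin

definition principal :: "'a::comm_ring_1 \<Rightarrow> 'a set" where
  "principal x = {r * x | r. True}"

definition Ann :: "'a::comm_ring_1 \<Rightarrow> 'a set" where
  "Ann x = {r. r * x = 0}"

text \<open>The free R-module on the index type 'i: finitely supported functions 'i => R,
  with pointwise addition and scalar multiplication.\<close>

definition free_mod :: "('i \<Rightarrow> 'a::comm_ring_1) set" where
  "free_mod = {v. finite {i. v i \<noteq> 0}}"

text \<open>A submodule M of R is projective iff it is a direct summand (retract) of a free module: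
  there are R-linear maps s : M -> F and p : F -> M with p o s = id on M.
  The index type 'i of the free module is a parameter; when it occurs as a free type variable
  in a hypothesis of a theorem, it is implicitly existentially quantified.\<close>

definition projective_submod :: "'i itself \<Rightarrow> 'a::comm_ring_1 set \<Rightarrow> bool" where
  "projective_submod _ M \<longleftrightarrow>
    (\<exists>(s :: 'a \<Rightarrow> ('i \<Rightarrow> 'a)) (p :: ('i \<Rightarrow> 'a) \<Rightarrow> 'a).
       (\<forall>x\<in>M. s x \<in> free_mod) \<and> (\<forall>v\<in>free_mod. p v \<in> M) \<and>
       (\<forall>x\<in>M. \<forall>y\<in>M. s (x + y) = (\<lambda>i. s x i + s y i)) \<and>
       (\<forall>r. \<forall>x\<in>M. s (r * x) = (\<lambda>i. r * s x i)) \<and>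
       (\<forall>v\<in>free_mod. \<forall>w\<in>free_mod. p (\<lambda>i. v i + w i) = p v + p w) \<and>
       (\<forall>r. \<forall>v\<in>free_mod. p (\<lambda>i. r * v i) = r * p v) \<and>
       (\<forall>x\<in>M. p (s x) = x))"

end

theory Submission
  imports Defs
begin

lemma p_sum:
  fixes p :: "('i \<Rightarrow> 'a::comm_ring_1) \<Rightarrow> 'a"
  assumes add: "\<forall>v\<in>free_mod. \<forall>w\<in>free_mod. p (\<lambda>i. v i + w i) = p v + p w"
    and sc: "\<forall>r. \<forall>v\<in>free_mod. p (\<lambda>i. r * v i) = r * p v"
    and fin: "finite A"
  shows "\<And>w. {i. w i \<noteq> 0} \<subseteq> A \<Longrightarrow>
           p w = (\<Sum>i\<in>A. w i * p (\<lambda>j. if j = i then 1 else 0))"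
  using fin
proof (induction A rule: finite_induct)
  case empty
  have z: "(\<lambda>j::'i. 0::'a) \<in> free_mod" by (simp add: free_mod_def)
  from empty have "w = (\<lambda>j. 0 * (0::'a))" by auto
  moreover have "p (\<lambda>j::'i. 0 * (0::'a)) = 0 * p (\<lambda>j. 0)" using sc[rule_format, OF z, of 0] by simp
  ultimately show ?case by simp
next
  case (insert x A)
  define w' where "w' = w(x := 0)"
  define e where "e = (\<lambda>j::'i. if j = x then 1 else (0::'a))"
  have sw': "{i. w' i \<noteq> 0} \<subseteq> A" using insert.prems by (auto simp: w'_def)
  have fw': "w' \<in> free_mod" using sw' insert.hyps(1) by (auto simp: free_mod_def intro: finite_subset)
  have "{j. e j \<noteq> 0} \<subseteq> {x}" by (auto simp: e_def)
  then have fe: "e \<in> free_mod"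
    unfolding free_mod_def using finite_subset by blast
  have "{j. w x * e j \<noteq> 0} \<subseteq> {x}" by (auto simp: e_def)
  then have fe2: "(\<lambda>j. w x * e j) \<in> free_mod"
    unfolding free_mod_def using finite_subset by blast
  have "w = (\<lambda>j. w' j + w x * e j)" by (auto simp: w'_def e_def)
  then have "p w = p w' + p (\<lambda>j. w x * e j)" using add fw' fe2 by metis
  also have "p (\<lambda>j. w x * e j) = w x * p e" using sc fe by blast
  also have "p w' = (\<Sum>i\<in>A. w' i * p (\<lambda>j. if j = i then 1 else 0))" using insert.IH sw' by blast
  also have "\<dots> = (\<Sum>i\<in>A. w i * p (\<lambda>j. if j = i then 1 else 0))"
    using insert.hyps(2) by (intro sum.cong) (auto simp: w'_def)
  finally show ?case using insert.hyps by (simp add: e_def add.commute)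
qed

lemma key:
  fixes f :: "'a::comm_ring_1" and n :: nat
  assumes "n \<ge> 1"
    and "projective_submod TYPE('i) (principal (f ^ n))"
    and r: "r * f ^ Suc n = 0"
  shows "r * f ^ n = 0"
proof -
  let ?M = "principal (f ^ n)"
  let ?g = "f ^ n"
  obtain s :: "'a \<Rightarrow> ('i \<Rightarrow> 'a)" and p :: "('i \<Rightarrow> 'a) \<Rightarrow> 'a" where
    s1: "\<forall>x\<in>?M. s x \<in> free_mod" and p1: "\<forall>v\<in>free_mod. p v \<in> ?M" and
    sm: "\<forall>r. \<forall>x\<in>?M. s (r * x) = (\<lambda>i. r * s x i)" and
    pa: "\<forall>v\<in>free_mod. \<forall>w\<in>free_mod. p (\<lambda>i. v i + w i) = p v + p w" and
    ps: "\<forall>r. \<forall>v\<in>free_mod. p (\<lambda>i. r * v i) = r * p v" and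
    id: "\<forall>x\<in>?M. p (s x) = x"
    using assms(2) unfolding projective_submod_def by blast
  have gM: "?g \<in> ?M" unfolding principal_def by (rule CollectI, rule exI[of _ 1]) simp
  define v where "v = s ?g"
  have vF: "v \<in> free_mod" using s1 gM v_def by blast
  have s0: "s 0 = (\<lambda>i. 0)" using sm gM by (metis mult_zero_left)
  have rfv: "\<And>i. r * f * v i = 0"
  proof -
    fix i
    have "(r * f) * ?g = 0" using r by (simp add: algebra_simps)
    then have "s ((r * f) * ?g) = (\<lambda>i. 0)" using s0 by simp
    then show "r * f * v i = 0" using sm gM v_def by (metis (no_types, lifting))
  qed
  have "r * ?g = r * p v" using id gM v_def by simp
  also have "\<dots> = p (\<lambda>i. r * v i)" using ps vF by simp
  also have "\<dots> = (\<Sum>i\<in>{i. v i \<noteq> 0}. r * v i * p (\<lambda>j. if j = i then 1 else 0))"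
  proof (rule p_sum[OF pa ps])
    show "finite {i. v i \<noteq> 0}" using vF by (simp add: free_mod_def)
  qed auto
  also have "\<dots> = 0"
  proof (rule sum.neutral, rule ballI)
    fix i
    have "{j::'i. (if j = i then 1 else (0::'a)) \<noteq> 0} \<subseteq> {i}" by auto
    then have ef: "(\<lambda>j::'i. if j = i then 1 else (0::'a)) \<in> free_mod"
      unfolding free_mod_def using finite_subset by blast
    then obtain c where c: "p (\<lambda>j. if j = i then 1 else 0) = c * f ^ n"
      using p1 unfolding principal_def by blast
    obtain m where m: "n = Suc m" using assms(1) by (cases n) auto
    have "r * v i * p (\<lambda>j. if j = i then 1 else 0) = c * f ^ m * (r * f * v i)"
      using c m by (simp add: algebra_simps)
    then show "r * v i * p (\<lambda>j. if j = i then 1 else 0) = 0" using rfv by simp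
  qed
  finally show ?thesis .
qed

theorem proposition2p8:
  fixes f :: "'a::comm_ring_1" and n :: nat
  assumes "n \<ge> 1"
    and "projective_submod TYPE('i) (principal (f ^ n))"
  shows "\<forall>k\<ge>n. bij_betw (\<lambda>x. f ^ (k - n) * x) (principal (f ^ n)) (principal (f ^ k))
                 \<and> Ann (f ^ k) = Ann (f ^ n)"
proof (intro allI impI)
  fix k assume kn: "k \<ge> n"
  have ann: "\<And>r. r * f ^ k = 0 \<longleftrightarrow> r * f ^ n = 0" if "k \<ge> n" for k
    using that
  proof (induction k rule: dec_induct)
    case base then show ?case by simp
  next
    case (step k r)
    have "r * f ^ Suc k = 0 \<longleftrightarrow> (r * f) * f ^ k = 0" by (simp add: algebra_simps)
    also have "\<dots> \<longleftrightarrow> (r * f) * f ^ n = 0" using step.IH by blast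
    also have "\<dots> \<longleftrightarrow> r * f ^ Suc n = 0" by (simp add: algebra_simps)
    also have "\<dots> \<longleftrightarrow> r * f ^ n = 0"
      using key[OF assms, of r] by (auto simp: algebra_simps)
    finally show ?case .
  qed
  have A: "Ann (f ^ k) = Ann (f ^ n)" using ann[OF kn] by (auto simp: Ann_def)
  have pk: "f ^ k = f ^ (k - n) * f ^ n" using kn by (simp add: power_add[symmetric])
  have B: "bij_betw (\<lambda>x. f ^ (k - n) * x) (principal (f ^ n)) (principal (f ^ k))"
    unfolding bij_betw_def
  proof (intro conjI)
    show "inj_on (\<lambda>x. f ^ (k - n) * x) (principal (f ^ n))"
    proof (rule inj_onI)
      fix x y assume "x \<in> principal (f ^ n)" "y \<in> principal (f ^ n)"
        and e: "f ^ (k - n) * x = f ^ (k - n) * y"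
      then obtain a b where x: "x = a * f ^ n" and y: "y = b * f ^ n" by (auto simp: principal_def)
      have "(a - b) * f ^ k = 0" using e x y pk by (simp add: algebra_simps)
      then have "(a - b) * f ^ n = 0" using ann[OF kn] by blast
      then show "x = y" using x y by (simp add: algebra_simps)
    qed
    show "(\<lambda>x. f ^ (k - n) * x) ` principal (f ^ n) = principal (f ^ k)"
    proof
      show "(\<lambda>x. f ^ (k - n) * x) ` principal (f ^ n) \<subseteq> principal (f ^ k)"
        using pk by (auto simp: principal_def algebra_simps)
      show "principal (f ^ k) \<subseteq> (\<lambda>x. f ^ (k - n) * x) ` principal (f ^ n)"
      proof
        fix y assume "y \<in> principal (f ^ k)"
        then obtain r where y: "y = r * f ^ k" by (auto simp: principal_def)
        have "r * f ^ n \<in> principal (f ^ n)" by (auto simp: principal_def)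
        moreover have "y = f ^ (k - n) * (r * f ^ n)" using y pk by (simp add: algebra_simps)
        ultimately show "y \<in> (\<lambda>x. f ^ (k - n) * x) ` principal (f ^ n)" by blast
      qed
    qed
  qed
  show "bij_betw (\<lambda>x. f ^ (k - n) * x) (principal (f ^ n)) (principal (f ^ k)) \<and> Ann (f ^ k) = Ann (f ^ n)"
    using A B by blast
qed

end
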